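(* Let $C=\{c_1,\dots,c_m\}\subset\mathbb{R}^d_{\ge 0}$ be a finite nonempty set of vectors with $\|c_j\|_2=1$, and let $v\in\mathbb{R}^d_{\ge 0}$ with $\|v\|_2=1$ and $v\in\mathrm{Cone}(C)$. Then $\max_{c\in C}v^\top c\ge d^{-1/2}$.
   Context: $\mathrm{Cone}(C)$ is the set of nonnegative linear combinations of elements of $C$. *)

theory Defs
  imports "HOL-Analysis.Analysis"
begin

definition nonneg_cone :: "('a::real_vector) set \<Rightarrow> 'a set" where
  "nonneg_cone C = {x. \<exists>a. (\<forall>c\<in>C. a c \<ge> 0) \<and> x = (\<Sum>c\<in>C. a c *\<^sub>R c)}"

end

theory Submission
  imports Defs
begin

lemma sum_ge_one:
  fixes c :: "real ^ 'n"
  assumes "\<forall>i. c $ i \<ge> 0" "norm c = 1"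
  shows "(\<Sum>i\<in>UNIV. c $ i) \<ge> 1"
proof -
  have le1: "c $ i \<le> 1" for i
    using component_le_norm_cart[of c i] assms by simp
  have "c \<bullet> c = 1" using assms(2) by (simp add: dot_square_norm)
  hence "(\<Sum>i\<in>UNIV. c $ i * c $ i) = 1" by (simp add: inner_vec_def)
  moreover have "(\<Sum>i\<in>UNIV. c $ i * c $ i) \<le> (\<Sum>i\<in>UNIV. c $ i)"
    apply (rule sum_mono)
    using le1 assms(1) by (simp add: mult_left_le)
  ultimately show ?thesis by simp
qed

theorem lemma2:
  fixes C :: "(real ^ 'n) set" and v :: "real ^ 'n"
  assumes "finite C" and "C \<noteq> {}"
    and "\<forall>c\<in>C. (\<forall>i. c $ i \<ge> 0) \<and> norm c = 1"
    and "\<forall>i. v $ i \<ge> 0" and "norm v = 1"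
    and "v \<in> nonneg_cone C"
  shows "(MAX c\<in>C. v \<bullet> c) \<ge> 1 / sqrt (real CARD('n))"
proof -
  define M where "M = (MAX c\<in>C. v \<bullet> c)"
  obtain a where a: "\<forall>c\<in>C. a c \<ge> 0" and v: "v = (\<Sum>c\<in>C. a c *\<^sub>R c)"
    using assms(6) unfolding nonneg_cone_def by blast
  define S where "S = (\<Sum>c\<in>C. a c)"
  have Mge: "v \<bullet> c \<le> M" if "c \<in> C" for c
    unfolding M_def using assms(1) that by simp
  have pos: "v \<bullet> c \<ge> 0" if "c \<in> C" for c
    using assms(3,4) that unfolding inner_vec_def by (auto intro: sum_nonneg)
  have M0: "M \<ge> 0"
    using assms(2) Mge pos by (meson ex_in_conv order_trans)
  have "1 = v \<bullet> v" using assms(5) by (simp add: dot_square_norm)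
  also have "\<dots> = (\<Sum>c\<in>C. a c * (v \<bullet> c))"
    by (subst (2) v) (simp add: inner_sum_right)
  also have "\<dots> \<le> (\<Sum>c\<in>C. a c * M)"
    by (rule sum_mono) (use a Mge in \<open>auto intro: mult_left_mono\<close>)
  also have "\<dots> = M * S" by (simp add: S_def sum_distrib_left mult.commute)
  finally have h1: "1 \<le> M * S" .
  define one :: "real ^ 'n" where "one = (\<chi> i. 1)"
  have "one \<bullet> v = (\<Sum>c\<in>C. a c * (one \<bullet> c))"
    by (subst v) (simp add: inner_sum_right)
  also have "\<dots> \<ge> (\<Sum>c\<in>C. a c * 1)"
  proof (rule sum_mono)
    fix c assume c: "c \<in> C"
    have "one \<bullet> c = (\<Sum>i\<in>UNIV. c $ i)" by (simp add: one_def inner_vec_def)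
    hence "one \<bullet> c \<ge> 1" using sum_ge_one[of c] assms(3) c by simp
    thus "a c * 1 \<le> a c * (one \<bullet> c)" using a c by (intro mult_left_mono) auto
  qed
  finally have "S \<le> one \<bullet> v" by (simp add: S_def)
  also have "\<dots> \<le> norm one * norm v" by (rule norm_cauchy_schwarz)
  also have "norm one = sqrt (real CARD('n))"
    by (simp add: norm_eq_sqrt_inner one_def inner_vec_def)
  finally have h2: "S \<le> sqrt (real CARD('n))" using assms(5) by simp
  have "1 \<le> M * sqrt (real CARD('n))"
    using h1 h2 M0 by (meson mult_left_mono order_trans)
  moreover have "sqrt (real CARD('n)) > 0" by simp
  ultimately show ?thesis unfolding M_def[symmetric] by (simp add: field_simps)
qed

end
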